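(* Let $p>q>1$ be relatively prime integers. Then the map $F_{p,q}:A_{pq}^{\mathbb{Z}}\to A_{pq}^{\mathbb{Z}}$ is measure preserving and strongly mixing with respect to $\mu$, i.e. $\mu(F_{p,q}^{-1}(S))=\mu(S)$ for every Borel set $S$, and $\lim_{t\to\infty}\mu(F_{p,q}^{-t}(U)\cap V)=\mu(U)\mu(V)$ for all Borel sets $U,V\subseteq A_{pq}^{\mathbb{Z}}$.
   Context: For an integer $n>1$, $A_n=\{0,1,\dots,n-1\}$. $A_{pq}^{\mathbb{Z}}$ carries the product topology, and $\mu$ is the uniform Bernoulli (product) probability measure on its Borel sets, i.e. $\mu(\{c \mid c(i)c(i+1)\cdots c(i+|w|-1)=w\})=(pq)^{-|w|}$ for every nonempty word $w$ over $A_{pq}$ and $i\in\mathbb{Z}$. Define $g_{p,q}:A_{pq}\times A_{pq}\to A_{pq}$ by writing $x=x_1q+x_0$, $y=y_1q+y_0$ with $x_0,y_0\in A_q$, $x_1,y_1\in A_p$ (uniquely), and setting $g_{p,q}(x,y)=x_0p+y_1$. Then $F_{p,q}(c)(i)=g_{p,q}\big(g_{p,q}(c(i-1),c(i)),\,g_{p,q}(c(i),c(i+1))\big)$ for $c\in A_{pq}^{\mathbb{Z}}$, $i\in\mathbb{Z}$. *)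

theory Defs
  imports "HOL-Probability.Probability"
begin

definition alphabet :: "nat \<Rightarrow> nat set" where
  "alphabet n = {0..<n}"

text \<open>Uniform Bernoulli measure on A_{pq}^Z: the infinite product of the uniform
  probability measure on A_{pq}, on the product sigma-algebra (= Borel sets of the
  product topology, since A_{pq} is finite discrete and the index set is countable).\<close>
definition bernoulli_mu :: "nat \<Rightarrow> nat \<Rightarrow> (int \<Rightarrow> nat) measure" where
  "bernoulli_mu p q = (\<Pi>\<^sub>M i\<in>(UNIV::int set). uniform_count_measure (alphabet (p * q)))"

definition g_pq :: "nat \<Rightarrow> nat \<Rightarrow> nat \<Rightarrow> nat \<Rightarrow> nat" where
  "g_pq p q x y = (x mod q) * p + y div q"

definition F_pq :: "nat \<Rightarrow> nat \<Rightarrow> (int \<Rightarrow> nat) \<Rightarrow> (int \<Rightarrow> nat)" where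
  "F_pq p q c = (\<lambda>i. g_pq p q (g_pq p q (c (i - 1)) (c i)) (g_pq p q (c i) (c (i + 1))))"

end

theory Submission
  imports Defs
begin


primrec num :: "nat \<Rightarrow> int \<Rightarrow> nat \<Rightarrow> (int \<Rightarrow> nat) \<Rightarrow> nat" where
  "num P a 0 c = 0"
| "num P a (Suc k) c = num P a k c * P + c (a + int k)"

lemma num_lt:
  assumes "\<forall>i. c i < P" shows "num P a k c < P ^ k"
proof (induction k)
  case 0 then show ?case by simp
next
  case (Suc k)
  have "num P a k c + 1 \<le> P ^ k" using Suc by simp
  hence "(num P a k c + 1) * P \<le> P ^ k * P" by (rule mult_le_mono1)
  moreover have "c (a + int k) < P" using assms by simp
  ultimately show ?case by (simp add: algebra_simps)
qed

lemma num_digits: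
  assumes "\<forall>i. c i < P" "0 < P"
  shows "num P a k c = v \<longleftrightarrow> v < P ^ k \<and> (\<forall>j<k. c (a + int j) = v div P ^ (k - 1 - j) mod P)"
proof (induction k arbitrary: v)
  case 0 then show ?case by auto
next
  case (Suc k)
  have d: "c (a + int k) < P" using assms by simp
  have "num P a (Suc k) c = v \<longleftrightarrow> num P a k c = v div P \<and> c (a + int k) = v mod P"
  proof
    assume "num P a (Suc k) c = v"
    then show "num P a k c = v div P \<and> c (a + int k) = v mod P" using d assms(2) by auto
  next
    assume "num P a k c = v div P \<and> c (a + int k) = v mod P"
    then show "num P a (Suc k) c = v" by simp
  qed
  also have "\<dots> \<longleftrightarrow> v div P < P ^ k \<and> (\<forall>j<k. c (a + int j) = v div P div P ^ (k - 1 - j) mod P)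
      \<and> c (a + int k) = v mod P" using Suc by simp
  also have "\<dots> \<longleftrightarrow> v < P ^ Suc k \<and> (\<forall>j<Suc k. c (a + int j) = v div P ^ (Suc k - 1 - j) mod P)"
  proof -
    have 1: "v div P < P ^ k \<longleftrightarrow> v < P ^ Suc k" using assms(2)
      by (simp add: div_less_iff_less_mult mult.commute)
    have 2: "v div P div P ^ (k - 1 - j) = v div P ^ (Suc k - 1 - j)" if "j < k" for j
    proof -
      have "Suc k - 1 - j = Suc (k - 1 - j)" using that by simp
      thus ?thesis by (simp add: div_mult2_eq)
    qed
    show ?thesis using 1 2 by (auto simp: less_Suc_eq)
  qed
  finally show ?case .
qed



definition Gm :: "nat \<Rightarrow> nat \<Rightarrow> (int \<Rightarrow> nat) \<Rightarrow> (int \<Rightarrow> nat)" where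
  "Gm p q c = (\<lambda>i. g_pq p q (c i) (c (i + 1)))"

lemma mod_aux:
  fixes x y P :: nat assumes "y < P"
  shows "(x * P + y) mod (P ^ k * P) = (x mod P ^ k) * P + y"
proof -
  have e: "x * P + y = (x div P ^ k) * (P ^ k * P) + ((x mod P ^ k) * P + y)"
    by (metis ab_semigroup_mult_class.mult_ac(1) group_cancel.add2 left_add_mult_distrib mod_div_mult_eq)
  have "0 < P ^ k" using assms by simp
  hence "x mod P ^ k + 1 \<le> P ^ k" by (simp add: Suc_leI)
  hence "(x mod P ^ k + 1) * P \<le> P ^ k * P" by (rule mult_le_mono1)
  hence "(x mod P ^ k) * P + y < P ^ k * P" using assms by simp
  thus ?thesis unfolding e by (simp only: mod_mult_self3 mod_less)
qed

lemma g_lt: assumes "x < p * q" "y < p * q" "0 < q" shows "g_pq p q x y < p * q"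
proof -
  have "x mod q + 1 \<le> q" using assms(3) by (simp add: Suc_leI)
  hence a: "(x mod q + 1) * p \<le> q * p" by (rule mult_le_mono1)
  have "y div q < p" using assms by (simp add: div_less_iff_less_mult)
  thus ?thesis using a unfolding g_pq_def by (simp add: algebra_simps)
qed

lemma Gm_Om: "\<forall>i. c i < p * q \<Longrightarrow> 0 < q \<Longrightarrow> \<forall>i. Gm p q c i < p * q"
  by (simp add: Gm_def g_lt)

lemma num_G:
  assumes c: "\<forall>i. c i < p * q" and q: "0 < q" and p: "0 < p"
  shows "num (p*q) a k (Gm p q c) = (num (p*q) a (k+1) c div q) mod (p*q)^k"
proof (induction k)
  case 0 then show ?case by simp
next
  case (Suc k)
  define N where "N = num (p*q) a (k+1) c"
  define d where "d = c (a + int (k+1))"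
  have d: "d < p * q" using c d_def by simp
  have Nmod: "c (a + int k) mod q = N mod q"
    by (simp add: N_def mod_mult_self3 mult.assoc[symmetric] )
  have "num (p*q) a (Suc k) (Gm p q c) = ((N div q) mod (p*q)^k) * (p*q) + ((N mod q) * p + d div q)"
    using Suc Nmod by (simp add: Gm_def g_pq_def N_def d_def ac_simps)
  also have "(N mod q) * p + d div q < p * q"
  proof -
    have "N mod q < q" using q by simp
    moreover have "q \<le> p * q" using p by simp
    ultimately have "N mod q < p * q" by linarith
    thus ?thesis using g_lt[OF _ d q, of "N mod q"] by (simp add: g_pq_def mult.commute)
  qed
  hence "((N div q) mod (p*q)^k) * (p*q) + ((N mod q) * p + d div q)
      = ((N div q) * (p*q) + ((N mod q) * p + d div q)) mod ((p*q)^k * (p*q))"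
    by (simp add: mod_aux)
  also have "(N div q) * (p*q) + ((N mod q) * p + d div q) = (N * (p*q) + d) div q"
  proof -
    have "N * (p*q) + d = d + (N * p) * q" by (simp add: ac_simps)
    hence "(N * (p*q) + d) div q = N * p + d div q" using q by (simp only: div_mult_self2 neq0_conv) simp
    moreover have "N * p = (N div q) * (p*q) + (N mod q) * p"
      by (metis add_mult_distrib2 div_mod_decomp mult.commute mult.left_commute)
    ultimately show ?thesis by simp
  qed
  also have "N * (p*q) + d = num (p*q) a (Suc k + 1) c" by (simp add: N_def d_def)
  finally show ?case by (simp add: power_Suc2 mult.commute)
qed



lemma Gpow_Om: "\<forall>i. c i < p * q \<Longrightarrow> 0 < q \<Longrightarrow> \<forall>i. (Gm p q ^^ j) c i < p * q"
  by (induction j) (auto simp: Gm_Om)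

lemma mod_div_aux:
  fixes x P q p :: nat assumes "P = p * q" "0 < q"
  shows "((x mod (P^k*P)) div q) mod P^k = (x div q) mod P^k"
proof -
  define m where "m = P^k*p"
  have e: "P^k*P = q * m" using assms(1) by (simp add: ac_simps m_def)
  have "x mod (q*m) = q*(x div q mod m) + x mod q" by (rule mod_mult2_eq)
  hence "(x mod (q*m)) div q = x div q mod m" using assms(2) by simp
  hence "(x mod (P^k*P)) div q = (x div q) mod m" by (simp only: e)
  thus ?thesis by (simp add: mod_mod_cancel m_def)
qed

lemma num_Gpow:
  assumes c: "\<forall>i. c i < p * q" and q: "0 < q" and p: "0 < p"
  shows "num (p*q) a k ((Gm p q ^^ j) c) = (num (p*q) a (k+j) c div q^j) mod (p*q)^k"
proof (induction j arbitrary: k)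
  case 0 then show ?case by (simp add: num_lt[OF c])
next
  case (Suc j)
  have "num (p*q) a k ((Gm p q ^^ Suc j) c) = num (p*q) a k (Gm p q ((Gm p q ^^ j) c))" by simp
  also have "\<dots> = (num (p*q) a (k+1) ((Gm p q ^^ j) c) div q) mod (p*q)^k"
    by (rule num_G[OF Gpow_Om[OF c q] q p])
  also have "\<dots> = (((num (p*q) a (k+1+j) c div q^j) mod ((p*q)^k*(p*q))) div q) mod (p*q)^k"
    using Suc[of "k+1"] by (simp only: power_add power_one_right)
  also have "\<dots> = ((num (p*q) a (k+1+j) c div q^j) div q) mod (p*q)^k"
    by (rule mod_div_aux[OF refl q])
  also have "\<dots> = (num (p*q) a (k + Suc j) c div q^Suc j) mod (p*q)^k"
    by (simp only: div_mult2_eq power_Suc2 add_Suc_right add_Suc Suc_eq_plus1 add.assoc add.commute[of 1 j]) (simp only: power_add power_one_right div_mult2_eq)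
  finally show ?case .
qed

lemma num_shift: "num P a k (\<lambda>i. d (i - s)) = num P (a - s) k d"
  by (induction k) (simp_all add: algebra_simps)

lemma Gm_shift: "Gm p q (\<lambda>i. d (i - s)) = (\<lambda>i. Gm p q d (i - s))"
  by (simp add: Gm_def algebra_simps)

lemma Gpow_shift: "(Gm p q ^^ j) (\<lambda>i. d (i - s)) = (\<lambda>i. (Gm p q ^^ j) d (i - s))"
  by (induction j) (simp_all add: Gm_shift)

lemma F_Gm: "F_pq p q c = (\<lambda>i. Gm p q (Gm p q c) (i - 1))"
  by (simp add: F_pq_def Gm_def add.commute)

lemma Fpow_Gm: "(F_pq p q ^^ t) c = (\<lambda>i. (Gm p q ^^ (2*t)) c (i - int t))"
proof (induction t)
  case 0 then show ?case by simp
next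
  case (Suc t)
  have "(F_pq p q ^^ Suc t) c = F_pq p q ((F_pq p q ^^ t) c)" by simp
  also have "\<dots> = (\<lambda>i. Gm p q (Gm p q (\<lambda>i. (Gm p q ^^ (2*t)) c (i - int t))) (i - 1))"
    by (subst F_Gm) (simp only: Suc)
  also have "\<dots> = (\<lambda>i. (Gm p q ^^ (2*Suc t)) c (i - int (Suc t)))"
    by (simp add: Gm_shift algebra_simps)
  finally show ?case .
qed

lemma num_concat: "num P b (m + n) c = num P b m c * P ^ n + num P (b + int m) n c"
  by (induction n) (simp_all add: algebra_simps)

lemma num_window:
  assumes c: "\<forall>i. c i < P"
  shows "num P a k c = (num P (a - int s) (s + k + r) c div P ^ r) mod P ^ k"
proof -
  have "num P (a - int s) (s + (k + r)) c = num P (a - int s) s c * P^(k+r) + num P a (k + r) c"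
    by (simp add: num_concat)
  also have "num P a (k + r) c = num P a k c * P^r + num P (a + int k) r c"
    by (simp add: num_concat)
  finally have e: "num P (a - int s) (s + k + r) c = (num P (a - int s) s c * P^k + num P a k c) * P^r + num P (a + int k) r c"
    by (simp add: algebra_simps power_add)
  have "0 < P" using c by (metis gr_zeroI not_less0)
  hence "(num P (a - int s) (s + k + r) c div P ^ r) = num P (a - int s) s c * P^k + num P a k c"
    unfolding e using num_lt[OF c, of "a + int k" r] by simp
  thus ?thesis using num_lt[OF c, of a k] by simp
qed

lemma num_Fpow:
  assumes c: "\<forall>i. c i < p * q" and q: "0 < q" and p: "0 < p"
  shows "num (p*q) a k ((F_pq p q ^^ t) c) = (num (p*q) (a - int t) (k + 2*t) c div q^(2*t)) mod (p*q)^k"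
  by (simp add: Fpow_Gm num_shift num_Gpow[OF c q p])



locale CAq = fixes p q :: nat assumes q1: "1 < q" and qp: "q < p"
begin

abbreviation "mu \<equiv> bernoulli_mu p q"

lemma p0: "0 < p" and q0: "0 < q" and P0: "0 < p * q" using q1 qp by auto

lemma pps: "product_prob_space (\<lambda>_::int. uniform_count_measure (alphabet (p*q)))"
proof -
  have "prob_space (uniform_count_measure (alphabet (p*q)))"
    by (rule prob_space_uniform_count_measure) (use P0 in \<open>auto simp: alphabet_def\<close>)
  thus ?thesis unfolding product_prob_space_def product_sigma_finite_def product_prob_space_axioms_def
    by (auto intro: prob_space_imp_sigma_finite)
qed

lemma prob_mu: "prob_space mu"
  unfolding bernoulli_mu_def
  by (rule prob_space_PiM, rule prob_space_uniform_count_measure) (use P0 in \<open>auto simp: alphabet_def\<close>)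

lemma space_mu: "space mu = {c. \<forall>i. c i < p * q}"
  by (auto simp: bernoulli_mu_def space_PiM space_uniform_count_measure alphabet_def PiE_UNIV_domain)

lemma cyl_eq:
  assumes "v < (p*q)^k"
  shows "{c \<in> space mu. num (p*q) a k c = v} =
    {c \<in> space mu. \<forall>i\<in>(\<lambda>j. a + int j) ` {..<k}. c i \<in> {v div (p*q) ^ (k - 1 - nat (i - a)) mod (p*q)}}"
  using assms num_digits[of _ "p*q" a k v] P0 by (auto simp: space_mu)

lemma cyl_emeasure:
  assumes "v < (p*q)^k"
  shows "emeasure mu {c \<in> space mu. num (p*q) a k c = v} = ennreal (1 / (p*q)^k)"
proof -
  let ?J = "(\<lambda>j. a + int j) ` {..<k}"
  let ?X = "\<lambda>i. {v div (p*q) ^ (k - 1 - nat (i - a)) mod (p*q)}"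
  have "emeasure mu {c \<in> space mu. num (p*q) a k c = v} = (\<Prod>i\<in>?J. emeasure (uniform_count_measure (alphabet (p*q))) (?X i))"
    apply (subst cyl_eq[OF assms])
    unfolding bernoulli_mu_def
    by (rule product_prob_space.emeasure_PiM_Collect[OF pps])
       (auto simp: sets_uniform_count_measure alphabet_def P0 p0 q0)
  also have "\<dots> = (\<Prod>i\<in>?J. ennreal (1 / (p*q)))"
  proof (rule prod.cong)
    fix i
    have "(v div (p * q) ^ (k - 1 - nat (i - a)) mod (p * q)) < p * q" using p0 q0 by simp
    thus "emeasure (uniform_count_measure (alphabet (p*q))) (?X i) = ennreal (1 / (p*q))"
      by (subst emeasure_uniform_count_measure) (auto simp: alphabet_def ennreal_of_nat_eq_real_of_nat divide_ennreal)
  qed simp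
  also have "\<dots> = ennreal (1 / (p*q)) ^ k"
    by (simp add: card_image inj_on_def)
  also have "\<dots> = ennreal (1 / (p*q)^k)"
    by (simp add: ennreal_power power_one_over)
  finally show ?thesis .
qed

lemma cyl_sets: "{c \<in> space mu. num (p*q) a k c = v} \<in> sets mu"
proof (cases "v < (p*q)^k")
  case True
  show ?thesis apply (subst cyl_eq[OF True]) unfolding bernoulli_mu_def
    by (rule sets.sets_Collect_finite_All) (auto simp: sets_uniform_count_measure alphabet_def P0)
next
  case False
  hence "{c \<in> space mu. num (p*q) a k c = v} = {}"
    using num_lt[of _ "p*q" a k] by (fastforce simp: space_mu)
  thus ?thesis by (simp only: sets.empty_sets)
qed

lemma win_eq: "{c \<in> space mu. num (p*q) a k c \<in> S} = (\<Union>v\<in>S \<inter> {..<(p*q)^k}. {c \<in> space mu. num (p*q) a k c = v})"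
  using num_lt[of _ "p*q" a k] by (auto simp: space_mu)

lemma win_sets: "{c \<in> space mu. num (p*q) a k c \<in> S} \<in> sets mu"
  unfolding win_eq by (rule sets.finite_UN) (auto intro: cyl_sets)

lemma win_measure: "measure mu {c \<in> space mu. num (p*q) a k c \<in> S} = card (S \<inter> {..<(p*q)^k}) / (p*q)^k"
proof -
  interpret prob_space mu by (rule prob_mu)
  have "measure mu {c \<in> space mu. num (p*q) a k c \<in> S} = (\<Sum>v\<in>S \<inter> {..<(p*q)^k}. measure mu {c \<in> space mu. num (p*q) a k c = v})"
    unfolding win_eq
    by (rule finite_measure_finite_Union) (auto intro: cyl_sets simp: disjoint_family_on_def)
  also have "\<dots> = (\<Sum>v\<in>S \<inter> {..<(p*q)^k}. 1 / (p*q)^k)"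
    by (rule sum.cong) (auto simp: measure_def cyl_emeasure)
  finally show ?thesis by simp
qed

end


lemma lt_aux: fixes y R r Q :: nat shows "y < R \<Longrightarrow> r < Q \<Longrightarrow> y*Q + r < Q*R"
proof -
  assume a: "y < R" "r < Q"
  have "y * Q + r < (y+1) * Q" using a by simp
  also have "\<dots> \<le> R * Q" using a by (intro mult_le_mono1) simp
  finally show ?thesis by (simp add: mult.commute)
qed

lemma card_div_fiber:
  fixes Q R :: nat assumes "0 < Q"
  shows "card {N. N < Q*R \<and> f (N div Q)} = Q * card {y. y < R \<and> f y}"
proof -
  have "bij_betw (\<lambda>N. (N div Q, N mod Q)) {N. N < Q*R \<and> f (N div Q)} ({y. y < R \<and> f y} \<times> {..<Q})"
  proof (rule bij_betw_byWitness[where f' = "\<lambda>(y,r). y*Q + r"])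
    show "\<forall>a\<in>{N. N < Q*R \<and> f (N div Q)}. (case (a div Q, a mod Q) of (y, r) \<Rightarrow> y * Q + r) = a" by simp
    show "\<forall>a'\<in>{y. y < R \<and> f y} \<times> {..<Q}. (\<lambda>N. (N div Q, N mod Q)) (case a' of (y, r) \<Rightarrow> y * Q + r) = a'"
      using assms by auto
    show "(\<lambda>N. (N div Q, N mod Q)) ` {N. N < Q * R \<and> f (N div Q)} \<subseteq> {y. y < R \<and> f y} \<times> {..<Q}"
      using assms by (auto simp: div_less_iff_less_mult mult.commute)
    show "(\<lambda>(y, r). y * Q + r) ` ({y. y < R \<and> f y} \<times> {..<Q}) \<subseteq> {N. N < Q * R \<and> f (N div Q)}"
      by (auto simp: lt_aux)
  qed
  hence "card {N. N < Q*R \<and> f (N div Q)} = card ({y. y < R \<and> f y} \<times> {..<Q})" by (rule bij_betw_same_card)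
  thus ?thesis by (simp add: card_cartesian_product)
qed

lemma card_mod_fiber:
  fixes K m :: nat assumes "0 < K"
  shows "card {y. y < K*m \<and> g (y mod K)} = m * card {r. r < K \<and> g r}"
proof -
  have "bij_betw (\<lambda>y. (y mod K, y div K)) {y. y < K*m \<and> g (y mod K)} ({r. r < K \<and> g r} \<times> {..<m})"
  proof (rule bij_betw_byWitness[where f' = "\<lambda>(r,z). z*K + r"])
    show "\<forall>a\<in>{y. y < K*m \<and> g (y mod K)}. (case (a mod K, a div K) of (r, z) \<Rightarrow> z * K + r) = a" by simp
    show "\<forall>a'\<in>{r. r < K \<and> g r} \<times> {..<m}. (\<lambda>y. (y mod K, y div K)) (case a' of (r, z) \<Rightarrow> z * K + r) = a'"
      using assms by auto
    show "(\<lambda>y. (y mod K, y div K)) ` {y. y < K*m \<and> g (y mod K)} \<subseteq> {r. r < K \<and> g r} \<times> {..<m}"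
      using assms by (auto simp: div_less_iff_less_mult mult.commute)
    show "(\<lambda>(r, z). z * K + r) ` ({r. r < K \<and> g r} \<times> {..<m}) \<subseteq> {y. y < K*m \<and> g (y mod K)}"
      by (auto simp: lt_aux)
  qed
  hence "card {y. y < K*m \<and> g (y mod K)} = card ({r. r < K \<and> g r} \<times> {..<m})" by (rule bij_betw_same_card)
  thus ?thesis by (simp add: card_cartesian_product)
qed

lemma card_Fpow_count:
  fixes p q :: nat assumes "0 < p" "0 < q"
  shows "card {N. N < (p*q)^(k+2*t) \<and> (N div q^(2*t)) mod (p*q)^k \<in> S} = (p*q)^(2*t) * card (S \<inter> {..<(p*q)^k})"
proof -
  have e: "(p*q)^(k+2*t) = q^(2*t) * ((p*q)^k * p^(2*t))"
    by (simp add: power_add power_mult_distrib ac_simps)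
  have "card {N. N < (p*q)^(k+2*t) \<and> (N div q^(2*t)) mod (p*q)^k \<in> S}
      = q^(2*t) * card {y. y < (p*q)^k * p^(2*t) \<and> y mod (p*q)^k \<in> S}"
    unfolding e by (rule card_div_fiber[where f = "\<lambda>y. y mod (p*q)^k \<in> S"]) (use assms in simp)
  also have "card {y. y < (p*q)^k * p^(2*t) \<and> y mod (p*q)^k \<in> S} = p^(2*t) * card {r. r < (p*q)^k \<and> r \<in> S}"
    by (rule card_mod_fiber) (use assms in simp)
  also have "{r. r < (p*q)^k \<and> r \<in> S} = S \<inter> {..<(p*q)^k}" by auto
  finally show ?thesis by (simp add: power_mult_distrib)
qed



context CAq begin

definition dep :: "int \<Rightarrow> nat \<Rightarrow> (int\<Rightarrow>nat) set \<Rightarrow> bool" where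
  "dep a k E \<longleftrightarrow> (\<forall>c\<in>space mu. \<forall>c'\<in>space mu. (\<forall>j<k. c (a + int j) = c' (a + int j)) \<longrightarrow> (c \<in> E \<longleftrightarrow> c' \<in> E))"

lemma num_eq_digits:
  assumes "c \<in> space mu" "c' \<in> space mu" "num (p*q) a k c = num (p*q) a k c'" "j < k"
  shows "c (a + int j) = c' (a + int j)"
proof -
  have A: "\<forall>i. c i < p*q" "\<forall>i. c' i < p*q" using assms by (auto simp: space_mu)
  have 1: "c (a + int j) = num (p*q) a k c' div (p*q) ^ (k - 1 - j) mod (p*q)"
    using num_digits[OF A(1) P0, of a k "num (p*q) a k c'"] assms(3,4) by simp
  have 2: "c' (a + int j) = num (p*q) a k c' div (p*q) ^ (k - 1 - j) mod (p*q)"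
    using num_digits[OF A(2) P0, of a k "num (p*q) a k c'"] assms(4) by simp
  show ?thesis using 1 2 by simp
qed

lemma win_rep:
  assumes "E \<subseteq> space mu" "dep a k E"
  shows "E = {c \<in> space mu. num (p*q) a k c \<in> num (p*q) a k ` E}"
proof
  show "E \<subseteq> {c \<in> space mu. num (p*q) a k c \<in> num (p*q) a k ` E}" using assms(1) by auto
  show "{c \<in> space mu. num (p*q) a k c \<in> num (p*q) a k ` E} \<subseteq> E"
  proof clarify
    fix c c' assume c: "c \<in> space mu" and c': "c' \<in> E" and e: "num (p*q) a k c = num (p*q) a k c'"
    have "c' \<in> space mu" using c' assms(1) by auto
    hence "\<forall>j<k. c (a + int j) = c' (a + int j)" using num_eq_digits[OF c _ e] by blast
    thus "c \<in> E" using assms(2) c c' \<open>c' \<in> space mu\<close> unfolding dep_def by blast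
  qed
qed

lemma dep_mono:
  assumes "dep (- int n) (2*n+1) E" "n \<le> m"
  shows "dep (- int m) (2*m+1) E"
  unfolding dep_def
proof (intro ballI impI)
  fix c c' assume cc: "c \<in> space mu" "c' \<in> space mu" and h: "\<forall>j<2*m+1. c (- int m + int j) = c' (- int m + int j)"
  have "\<forall>j<2*n+1. c (- int n + int j) = c' (- int n + int j)"
  proof (intro allI impI)
    fix j assume "j < 2*n+1"
    hence "m - n + j < 2*m+1" using assms(2) by simp
    with h have "c (- int m + int (m - n + j)) = c' (- int m + int (m - n + j))" by blast
    moreover have "- int m + int (m - n + j) = - int n + int j" using assms(2) by simp
    ultimately show "c (- int n + int j) = c' (- int n + int j)" by simp
  qed
  thus "c \<in> E \<longleftrightarrow> c' \<in> E" using assms(1) cc unfolding dep_def by blast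
qed

lemma dep_finite:
  assumes "finite J" "\<forall>c\<in>space mu. \<forall>c'\<in>space mu. (\<forall>i\<in>J. c i = c' i) \<longrightarrow> (c \<in> E \<longleftrightarrow> c' \<in> E)"
  shows "\<exists>n. dep (- int n) (2*n+1) E"
proof
  define n where "n = Max (insert 0 ((\<lambda>i. nat \<bar>i\<bar>) ` J))"
  have nb: "nat \<bar>i\<bar> \<le> n" if "i \<in> J" for i
    unfolding n_def using assms(1) that by (intro Max_ge) auto
  show "dep (- int n) (2*n+1) E" unfolding dep_def
  proof (intro ballI impI)
    fix c c' assume cc: "c \<in> space mu" "c' \<in> space mu" and h: "\<forall>j<2*n+1. c (- int n + int j) = c' (- int n + int j)"
    have "\<forall>i\<in>J. c i = c' i"
    proof
      fix i assume "i \<in> J"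
      hence b: "\<bar>i\<bar> \<le> int n" using nb by fastforce
      hence "nat (i + int n) < 2*n+1" by linarith
      with h have "c (- int n + int (nat (i + int n))) = c' (- int n + int (nat (i + int n)))" by blast
      moreover have "- int n + int (nat (i + int n)) = i" using b by linarith
      ultimately show "c i = c' i" by simp
    qed
    thus "c \<in> E \<longleftrightarrow> c' \<in> E" using assms(2) cc by blast
  qed
qed

abbreviation "Fp \<equiv> F_pq p q"

lemma Fpow_space: "c \<in> space mu \<Longrightarrow> (Fp ^^ t) c \<in> space mu"
  using Gpow_Om[of c p q "2*t"] q0 by (simp add: space_mu Fpow_Gm)

lemma Fpow_win:
  "(Fp ^^ t) -` {c \<in> space mu. num (p*q) a k c \<in> S} \<inter> space mu
   = {c \<in> space mu. num (p*q) (a - int t) (k + 2*t) c \<in> {N. (N div q^(2*t)) mod (p*q)^k \<in> S}}"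
  using num_Fpow[of _ p q a k t] p0 q0 Fpow_space by (auto simp: space_mu)

lemma Fpow_win_measure:
  "measure mu ((Fp ^^ t) -` {c \<in> space mu. num (p*q) a k c \<in> S} \<inter> space mu)
   = measure mu {c \<in> space mu. num (p*q) a k c \<in> S}"
proof -
  have e: "{N. (N div q^(2*t)) mod (p*q)^k \<in> S} \<inter> {..<(p*q)^(k+2*t)} = {N. N < (p*q)^(k+2*t) \<and> (N div q^(2*t)) mod (p*q)^k \<in> S}"
    by auto
  have "measure mu ((Fp ^^ t) -` {c \<in> space mu. num (p*q) a k c \<in> S} \<inter> space mu)
      = real ((p*q)^(2*t) * card (S \<inter> {..<(p*q)^k})) / (p*q)^(k+2*t)"
    unfolding Fpow_win win_measure e card_Fpow_count[OF p0 q0] by simp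
  also have "\<dots> = card (S \<inter> {..<(p*q)^k}) / (p*q)^k"
    using p0 q0 by (simp add: power_add field_simps)
  finally show ?thesis by (simp add: win_measure)
qed

lemma meas_win_fun:
  assumes "\<forall>c\<in>space mu. f c = h (num (p*q) a k c)" "f \<in> space mu \<rightarrow> space N"
  shows "f \<in> measurable mu N"
proof (rule measurableI)
  show "f x \<in> space N" if "x \<in> space mu" for x using assms(2) that by auto
  fix A
  have "f -` A \<inter> space mu = {c \<in> space mu. num (p*q) a k c \<in> h -` A}" using assms(1) by auto
  thus "f -` A \<inter> space mu \<in> sets mu" using win_sets[of a k "h -` A"] by simp
qed

lemma Fpow_measurable: "(Fp ^^ t) \<in> measurable mu mu"
proof -
  have "(\<lambda>\<omega> i. (Fp ^^ t) \<omega> i) \<in> measurable mu (Pi\<^sub>M UNIV (\<lambda>_. uniform_count_measure (alphabet (p*q))))"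
  proof (rule measurable_PiM_single'[where f = "\<lambda>i \<omega>. (Fp ^^ t) \<omega> i"])
    fix i :: int
    show "(\<lambda>\<omega>. (Fp ^^ t) \<omega> i) \<in> measurable mu (uniform_count_measure (alphabet (p*q)))"
    proof (rule meas_win_fun[where a = "i - int t" and k = "1 + 2*t" and h = "\<lambda>N. (N div q^(2*t)) mod (p*q)"])
      show "\<forall>c\<in>space mu. (Fp ^^ t) c i = num (p*q) (i - int t) (1 + 2*t) c div q^(2*t) mod (p*q)"
        using num_Fpow[of _ p q i 1 t] p0 q0 by (auto simp: space_mu)
      show "(\<lambda>\<omega>. (Fp ^^ t) \<omega> i) \<in> space mu \<rightarrow> space (uniform_count_measure (alphabet (p*q)))"
        using Fpow_space by (auto simp: space_mu space_uniform_count_measure alphabet_def)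
    qed
  next
    show "(\<lambda>\<omega> i. (Fp ^^ t) \<omega> i) \<in> space mu \<rightarrow> (\<Pi>\<^sub>E i\<in>UNIV. space (uniform_count_measure (alphabet (p*q))))"
      using Fpow_space by (auto simp: space_mu space_uniform_count_measure alphabet_def)
  qed
  thus ?thesis by (simp add: bernoulli_mu_def)
qed

lemma emb_rep:
  assumes "finite J" "\<And>j. j \<in> J \<Longrightarrow> X j \<in> sets (uniform_count_measure (alphabet (p*q)))"
  shows "prod_emb UNIV (\<lambda>_. uniform_count_measure (alphabet (p*q))) J (Pi\<^sub>E J X) \<in> sets mu"
    and "\<exists>n. dep (- int n) (2*n+1) (prod_emb UNIV (\<lambda>_. uniform_count_measure (alphabet (p*q))) J (Pi\<^sub>E J X))"
proof -
  show "prod_emb UNIV (\<lambda>_. uniform_count_measure (alphabet (p*q))) J (Pi\<^sub>E J X) \<in> sets mu"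
    unfolding bernoulli_mu_def using assms by (intro sets_PiM_I) auto
  show "\<exists>n. dep (- int n) (2*n+1) (prod_emb UNIV (\<lambda>_. uniform_count_measure (alphabet (p*q))) J (Pi\<^sub>E J X))"
    by (rule dep_finite[OF assms(1)]) (fastforce simp: prod_emb_iff bernoulli_mu_def space_PiM Pi_iff)
qed

lemma dep_measure_pres:
  assumes "E \<in> sets mu" "dep a k E"
  shows "measure mu ((Fp ^^ t) -` E \<inter> space mu) = measure mu E"
proof -
  have "E \<subseteq> space mu" using assms(1) sets.sets_into_space by auto
  hence e: "E = {c \<in> space mu. num (p*q) a k c \<in> num (p*q) a k ` E}" using win_rep assms(2) by blast
  show ?thesis by (subst (1 2) e) (rule Fpow_win_measure)
qed

lemma distr_Fpow: "distr mu mu (Fp ^^ t) = mu"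
proof -
  interpret pp: product_prob_space "\<lambda>_::int. uniform_count_measure (alphabet (p*q))" UNIV by (rule pps)
  interpret prob_space mu by (rule prob_mu)
  have "distr mu mu (Fp ^^ t) = Pi\<^sub>M UNIV (\<lambda>_. uniform_count_measure (alphabet (p*q)))"
  proof (rule pp.PiM_eq)
    show "sets (distr mu mu (Fp ^^ t)) = sets (Pi\<^sub>M UNIV (\<lambda>_. uniform_count_measure (alphabet (p*q))))"
      by (simp add: bernoulli_mu_def)
    fix J :: "int set" and X assume J: "finite J" "J \<subseteq> UNIV" and X: "\<And>j. j \<in> J \<Longrightarrow> X j \<in> sets (uniform_count_measure (alphabet (p*q)))"
    let ?E = "prod_emb UNIV (\<lambda>_. uniform_count_measure (alphabet (p*q))) J (Pi\<^sub>E J X)"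
    have Es: "?E \<in> sets mu" using emb_rep(1)[of J X, OF J(1) X] .
    obtain n where dn: "dep (- int n) (2*n+1) ?E" using emb_rep(2)[of J X, OF J(1) X] by blast
    have "emeasure (distr mu mu (Fp ^^ t)) ?E = emeasure mu ((Fp ^^ t) -` ?E \<inter> space mu)"
      using Es Fpow_measurable by (simp add: emeasure_distr)
    also have "\<dots> = emeasure mu ?E"
      using dep_measure_pres[OF Es dn, of t] Es Fpow_measurable
      by (simp add: emeasure_eq_measure measurable_sets)
    also have "\<dots> = (\<Prod>j\<in>J. emeasure (uniform_count_measure (alphabet (p*q))) (X j))"
      unfolding bernoulli_mu_def using pp.emeasure_PiM_emb[OF J(2) J(1) X] by simp
    finally show "emeasure (distr mu mu (Fp ^^ t)) ?E = (\<Prod>j\<in>J. emeasure (uniform_count_measure (alphabet (p*q))) (X j))" .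
  qed
  thus ?thesis by (simp add: bernoulli_mu_def)
qed

end


lemma mod_inj: "inj_on (\<lambda>r. (b + r) mod D) {..<(D::nat)}"
proof (rule inj_onI)
  fix r r' assume r: "r \<in> {..<D}" "r' \<in> {..<D}" and e: "(b + r) mod D = (b + r') mod D"
  have k: "x = y" if "x \<le> y" "x < D" "y < D" "(b + x) mod D = (b + y) mod D" for x y :: nat
  proof -
    have "D dvd (b + y) - (b + x)" using that mod_eq_dvd_iff_nat[of "b + x" "b + y" D] by simp
    hence "D dvd y - x" by simp
    moreover have "y - x < D" using that by simp
    ultimately have "y - x = 0" using dvd_imp_le by fastforce
    thus ?thesis using that by simp
  qed
  show "r = r'" using k[of r r'] k[of r' r] r e by (cases "r \<le> r'") auto
qed

lemma count_full:
  assumes "0 < D" "R \<subseteq> {..<(D::nat)}"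
  shows "card {r. r < D \<and> (b + r) mod D \<in> R} = card R"
proof -
  let ?f = "\<lambda>r. (b + r) mod D"
  have im: "?f ` {..<D} = {..<D}"
  proof (rule card_subset_eq)
    show "?f ` {..<D} \<subseteq> {..<D}" using assms(1) by auto
    show "card (?f ` {..<D}) = card {..<D}" using mod_inj by (rule card_image)
  qed simp
  have "bij_betw ?f {r. r < D \<and> ?f r \<in> R} R"
  proof (rule bij_betw_imageI)
    show "inj_on ?f {r. r < D \<and> ?f r \<in> R}" by (rule inj_on_subset[OF mod_inj]) auto
    show "?f ` {r. r < D \<and> ?f r \<in> R} = R"
    proof
      show "?f ` {r. r < D \<and> ?f r \<in> R} \<subseteq> R" by auto
      show "R \<subseteq> ?f ` {r. r < D \<and> ?f r \<in> R}"
      proof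
        fix x assume "x \<in> R"
        hence "x \<in> ?f ` {..<D}" using im assms(2) by auto
        then obtain r where "r < D" "x = ?f r" by auto
        thus "x \<in> ?f ` {r. r < D \<and> ?f r \<in> R}" using \<open>x \<in> R\<close> by auto
      qed
    qed
  qed
  thus ?thesis by (rule bij_betw_same_card)
qed

lemma count_le:
  assumes "l \<le> D" "R \<subseteq> {..<(D::nat)}"
  shows "card {r. r < l \<and> (b + r) mod D \<in> R} \<le> card R"
proof -
  have "card {r. r < l \<and> (b + r) mod D \<in> R} = card ((\<lambda>r. (b + r) mod D) ` {r. r < l \<and> (b + r) mod D \<in> R})"
    by (rule card_image[symmetric], rule inj_on_subset[OF mod_inj]) (use assms in auto)
  also have "\<dots> \<le> card R"
    by (rule card_mono) (use assms in \<open>auto intro: finite_subset\<close>)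
  finally show ?thesis .
qed

lemma count_split:
  assumes "D \<le> (l::nat)"
  shows "card {r. r < l \<and> P (b + r)} = card {r. r < D \<and> P (b + r)} + card {r. r < l - D \<and> P (b + D + r)}"
proof -
  have e: "{r. r < l \<and> P (b + r)} = {r. r < D \<and> P (b + r)} \<union> (\<lambda>r. D + r) ` {r. r < l - D \<and> P (b + D + r)}"
  proof (rule set_eqI, rule iffI)
    fix x assume x: "x \<in> {r. r < l \<and> P (b + r)}"
    show "x \<in> {r. r < D \<and> P (b + r)} \<union> (\<lambda>r. D + r) ` {r. r < l - D \<and> P (b + D + r)}"
    proof (cases "x < D")
      case True thus ?thesis using x by auto
    next
      case False
      hence "x = D + (x - D)" "x - D < l - D" "P (b + D + (x - D))" using x assms by (auto simp: add.assoc)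
      thus ?thesis by blast
    qed
  qed (use assms in \<open>auto simp: add.assoc\<close>)
  have "card {r. r < l \<and> P (b + r)} = card {r. r < D \<and> P (b + r)} + card ((\<lambda>r. D + r) ` {r. r < l - D \<and> P (b + D + r)})"
    unfolding e by (rule card_Un_disjoint) auto
  also have "card ((\<lambda>r. D + r) ` {r. r < l - D \<and> P (b + D + r)}) = card {r. r < l - D \<and> P (b + D + r)}"
    by (rule card_image) auto
  finally show ?thesis .
qed

lemma interval_count:
  assumes D: "0 < D" and R: "R \<subseteq> {..<(D::nat)}"
  shows "\<bar>real (card {r. r < l \<and> (b + r) mod D \<in> R}) - real l * real (card R) / real D\<bar> \<le> real (card R)"
  using R
proof (induction l arbitrary: b rule: less_induct)
  case (less l)
  show ?case
  proof (cases "l < D")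
    case True
    have 1: "card {r. r < l \<and> (b + r) mod D \<in> R} \<le> card R" using True R by (intro count_le) auto
    have "real l * real (card R) \<le> real D * real (card R)" by (rule mult_right_mono) (use True in auto)
    hence "real l * real (card R) / real D \<le> real (card R)" using D by (simp add: pos_divide_le_eq mult.commute)
    moreover have "0 \<le> real l * real (card R) / real D" by simp
    ultimately show ?thesis using 1 by linarith
  next
    case False
    hence sp: "card {r. r < l \<and> (b + r) mod D \<in> R} = card R + card {r. r < l - D \<and> (b + D + r) mod D \<in> R}"
      using count_split[of D l "\<lambda>x. x mod D \<in> R" b] count_full[OF D R, of b] by simp
    have IH: "\<bar>real (card {r. r < l - D \<and> (b + D + r) mod D \<in> R}) - real (l - D) * real (card R) / real D\<bar> \<le> real (card R)"
      using less.IH[of "l - D" "b + D"] False D R by simp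
    have "real l * real (card R) / real D = real (card R) + real (l - D) * real (card R) / real D"
      using False D by (simp add: of_nat_diff field_simps)
    thus ?thesis using sp IH by simp
  qed
qed



lemma card_div_sum:
  fixes M Y :: nat assumes "0 < M"
  shows "card {N. N < M*Y \<and> f (N div M) \<and> g N} = (\<Sum>y\<in>{y. y < Y \<and> f y}. card {r. r < M \<and> g (y*M + r)})"
proof -
  have e: "{N. N < M*Y \<and> f (N div M) \<and> g N} = (\<Union>y\<in>{y. y < Y \<and> f y}. (\<lambda>r. y*M + r) ` {r. r < M \<and> g (y*M + r)})"
  proof (rule set_eqI, rule iffI)
    fix N assume N: "N \<in> {N. N < M*Y \<and> f (N div M) \<and> g N}"
    have "N div M < Y" using N assms by (simp add: div_less_iff_less_mult mult.commute)
    moreover have "N = (N div M) * M + N mod M" by simp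
    moreover have "N mod M < M" using assms by simp
    ultimately show "N \<in> (\<Union>y\<in>{y. y < Y \<and> f y}. (\<lambda>r. y*M + r) ` {r. r < M \<and> g (y*M + r)})"
      using N by (intro UN_I[of "N div M"] image_eqI[of N _ "N mod M"]) auto
  next
    fix N assume "N \<in> (\<Union>y\<in>{y. y < Y \<and> f y}. (\<lambda>r. y*M + r) ` {r. r < M \<and> g (y*M + r)})"
    then obtain y r where "y < Y" "f y" "r < M" "g (y*M + r)" "N = y*M + r" by auto
    thus "N \<in> {N. N < M*Y \<and> f (N div M) \<and> g N}" using lt_aux[of y Y r M] by simp
  qed
  have "card {N. N < M*Y \<and> f (N div M) \<and> g N} = (\<Sum>y\<in>{y. y < Y \<and> f y}. card ((\<lambda>r. y*M + r) ` {r. r < M \<and> g (y*M + r)}))"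
    unfolding e
  proof (rule card_UN_disjoint)
    show "\<forall>(i::nat)\<in>{y. y < Y \<and> f y}. \<forall>(j::nat)\<in>{y. y < Y \<and> f y}. i \<noteq> j \<longrightarrow>
      (\<lambda>r. i*M + r) ` {r. r < M \<and> g (i*M + r)} \<inter> (\<lambda>r. j*M + r) ` {r. r < M \<and> g (j*M + r)} = {}"
    proof (intro ballI impI)
      fix i j :: nat assume "i \<noteq> j"
      show "(\<lambda>r. i*M + r) ` {r. r < M \<and> g (i*M + r)} \<inter> (\<lambda>r. j*M + r) ` {r. r < M \<and> g (j*M + r)} = {}"
      proof (rule ccontr)
        assume "(\<lambda>r. i*M + r) ` {r. r < M \<and> g (i*M + r)} \<inter> (\<lambda>r. j*M + r) ` {r. r < M \<and> g (j*M + r)} \<noteq> {}"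
        then obtain r s where "r < M" "s < M" "i*M + r = j*M + s" by auto
        hence "(i*M + r) div M = (j*M + s) div M" by simp
        hence "i = j" using \<open>r < M\<close> \<open>s < M\<close> by simp
        thus False using \<open>i \<noteq> j\<close> by simp
      qed
    qed
  qed auto
  also have "\<dots> = (\<Sum>y\<in>{y. y < Y \<and> f y}. card {r. r < M \<and> g (y*M + r)})"
    by (rule sum.cong) (auto intro: card_image inj_onI)
  finally show ?thesis .
qed



lemma mix_bound:
  fixes p q k t :: nat and S T :: "nat set"
  assumes q0: "0 < q" and qp: "q < p" and S: "S \<subseteq> {..<(p*q)^k}" and T: "T \<subseteq> {..<(p*q)^k}"
  shows "\<bar>real (card {N. N < (p*q)^(k+2*t) \<and> (N div q^(2*t)) mod (p*q)^k \<in> S \<and> (N div (p*q)^t) mod (p*q)^k \<in> T}) / (p*q)^(k+2*t)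
          - real (card S) * card T / ((p*q)^k)^2\<bar> \<le> real (card S) * card T / (p*q)^k * (q/p)^t"
proof -
  define K where "K = (p*q)^k"
  define Mt where "Mt = (p*q)^t"
  define Q where "Q = q^(2*t)"
  define D where "D = Q*K"
  define R where "R = {x. x < Q*K \<and> x div Q \<in> S}"
  have p0: "0 < p" using q0 qp by simp
  have K0: "0 < K" and M0: "0 < Mt" and Q0: "0 < Q" and D0: "0 < D"
    using p0 q0 by (auto simp: K_def Mt_def Q_def D_def)
  have cR: "card R = Q * card S"
  proof -
    have "card R = Q * card {y. y < K \<and> y \<in> S}"
      unfolding R_def by (rule card_div_fiber[OF Q0])
    also have "{y. y < K \<and> y \<in> S} = S" using S by (auto simp: K_def)
    finally show ?thesis .
  qed
  have Rsub: "R \<subseteq> {..<D}" by (auto simp: R_def D_def)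
  have cond: "((N div Q) mod K \<in> S) = (N mod D \<in> R)" for N
  proof -
    have "N mod (Q*K) = Q * (N div Q mod K) + N mod Q" by (rule mod_mult2_eq)
    hence "N mod D div Q = N div Q mod K" using Q0 by (simp add: D_def)
    moreover have "N mod D < D" using D0 by simp
    ultimately show ?thesis by (simp add: R_def D_def)
  qed
  have big: "(p*q)^(k+2*t) = Mt * (K*Mt)" unfolding K_def Mt_def mult_2 power_add by (simp add: ac_simps)
  define Y where "Y = {y. y < K*Mt \<and> y mod K \<in> T}"
  define c where "c = (\<lambda>y. card {r. r < Mt \<and> (y*Mt + r) mod D \<in> R})"
  have C: "card {N. N < (p*q)^(k+2*t) \<and> (N div q^(2*t)) mod (p*q)^k \<in> S \<and> (N div (p*q)^t) mod (p*q)^k \<in> T}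
        = (\<Sum>y\<in>Y. c y)"
  proof -
    have "{N. N < (p*q)^(k+2*t) \<and> (N div q^(2*t)) mod (p*q)^k \<in> S \<and> (N div (p*q)^t) mod (p*q)^k \<in> T}
        = {N. N < Mt*(K*Mt) \<and> (N div Mt) mod K \<in> T \<and> N mod D \<in> R}"
      using cond by (auto simp: big K_def Mt_def Q_def)
    also have "card \<dots> = (\<Sum>y\<in>Y. c y)"
      unfolding Y_def c_def by (rule card_div_sum[OF M0])
    finally show ?thesis by simp
  qed
  have cY: "card Y = Mt * card T"
  proof -
    have "card Y = Mt * card {r. r < K \<and> r \<in> T}" unfolding Y_def by (rule card_mod_fiber[OF K0])
    also have "{r. r < K \<and> r \<in> T} = T" using T by (auto simp: K_def)
    finally show ?thesis .
  qed
  define x where "x = real Mt * real (card R) / real D"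
  have each: "\<bar>real (c y) - x\<bar> \<le> real (card R)" for y
    unfolding c_def x_def using interval_count[OF D0 Rsub, of Mt "y*Mt"] by simp
  have "\<bar>real (\<Sum>y\<in>Y. c y) - real (card Y) * x\<bar> = \<bar>\<Sum>y\<in>Y. (real (c y) - x)\<bar>"
    by (simp add: sum_subtractf)
  also have "\<dots> \<le> (\<Sum>y\<in>Y. \<bar>real (c y) - x\<bar>)" by (rule sum_abs)
  also have "\<dots> \<le> (\<Sum>y\<in>Y. real (card R))" by (rule sum_mono) (rule each)
  finally have B: "\<bar>real (\<Sum>y\<in>Y. c y) - real (card Y) * x\<bar> \<le> real (card Y) * real (card R)" by simp
  define Cr where "Cr = real (\<Sum>y\<in>Y. c y)"
  have xe: "real (card Y) * x = real Mt * real Mt * real (card T) * real (card S) / real K"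
    unfolding x_def cY cR D_def using Q0 K0 by (simp add: field_simps)
  have B2: "\<bar>Cr - real Mt * real Mt * real (card T) * real (card S) / real K\<bar> \<le> real Mt * real (card T) * real Q * real (card S)"
    using B[unfolded xe] unfolding Cr_def cY cR by (simp add: ac_simps)
  have "Cr / real (Mt * (K*Mt)) - real (card S) * card T / (real K)^2
      = (Cr - real Mt * real Mt * real (card T) * real (card S) / real K) / (real K * real Mt * real Mt)"
    using K0 M0 by (simp add: field_simps power2_eq_square)
  hence "\<bar>Cr / real (Mt * (K*Mt)) - real (card S) * card T / (real K)^2\<bar>
      = \<bar>Cr - real Mt * real Mt * real (card T) * real (card S) / real K\<bar> / (real K * real Mt * real Mt)"
    using K0 M0 by (simp only: abs_div_pos) simp
  also have "\<dots> \<le> real Mt * real (card T) * real Q * real (card S) / (real K * real Mt * real Mt)"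
    using B2 K0 M0 by (intro divide_right_mono) auto
  also have "\<dots> = real (card S) * card T / real K * (real Q / real Mt)"
    using K0 M0 by (simp add: field_simps)
  also have "real Q / real Mt = (q/p)^t"
  proof -
    have 1: "real Q = (real q * real q)^t" by (simp add: Q_def mult_2 power_add power_mult_distrib)
    have 2: "real Mt = (real p * real q)^t" by (simp add: Mt_def power_mult_distrib)
    have 3: "(real q * real q) / (real p * real q) = real q / real p" using q0 by simp
    show ?thesis unfolding 1 2 power_divide[symmetric] 3 ..
  qed
  finally have fin: "\<bar>Cr / real (Mt * (K*Mt)) - real (card S) * card T / (real K)^2\<bar> \<le> real (card S) * card T / real K * (q/p)^t" .
  have e1: "real (card {N. N < (p*q)^(k+2*t) \<and> (N div q^(2*t)) mod (p*q)^k \<in> S \<and> (N div (p*q)^t) mod (p*q)^k \<in> T}) / (p*q)^(k+2*t) = Cr / real (Mt*(K*Mt))"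
    unfolding C Cr_def big[symmetric] by simp
  have e2: "real (card S) * card T / ((p*q)^k)^2 = real (card S)*card T/(real K)^2" by (simp add: K_def)
  have e3: "real (card S) * card T / (p*q)^k * (q/p)^t = real (card S) * card T / real K * (q/p)^t" by (simp add: K_def)
  show ?thesis unfolding e1 e2 e3 by (rule fin)
qed



lemma mix_limit:
  fixes p q k :: nat and S T :: "nat set"
  assumes q0: "0 < q" and qp: "q < p" and S: "S \<subseteq> {..<(p*q)^k}" and T: "T \<subseteq> {..<(p*q)^k}"
  shows "(\<lambda>t. real (card {N. N < (p*q)^(k+2*t) \<and> (N div q^(2*t)) mod (p*q)^k \<in> S \<and> (N div (p*q)^t) mod (p*q)^k \<in> T}) / (p*q)^(k+2*t))
          \<longlonglongrightarrow> real (card S) * card T / ((p*q)^k)^2"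
    (is "?a \<longlonglongrightarrow> ?L")
proof -
  let ?B = "real (card S) * card T / (p*q)^k"
  have "(\<lambda>t. (real q / real p) ^ t) \<longlonglongrightarrow> 0"
    by (rule LIMSEQ_realpow_zero) (use q0 qp in auto)
  hence z: "(\<lambda>t. ?B * (real q / real p) ^ t) \<longlonglongrightarrow> 0" by (rule tendsto_mult_right_zero)
  have "(\<lambda>t. ?a t - ?L) \<longlonglongrightarrow> 0"
  proof (rule Lim_null_comparison[OF _ z])
    show "\<forall>\<^sub>F t in sequentially. norm (?a t - ?L) \<le> ?B * (real q / real p) ^ t"
      using mix_bound[OF q0 qp S T] by (intro always_eventually allI) simp
  qed
  hence "(\<lambda>t. (?a t - ?L) + ?L) \<longlonglongrightarrow> 0 + ?L" by (intro tendsto_add) auto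
  thus ?thesis by simp
qed

context CAq begin

definition wset :: "(int \<Rightarrow> nat) set \<Rightarrow> bool" where
  "wset C \<longleftrightarrow> C \<in> sets mu \<and> (\<exists>n. dep (- int n) (2*n+1) C)"

lemma wset_mix:
  assumes U: "wset U" and V: "wset V"
  shows "(\<lambda>t. measure mu ((Fp ^^ t) -` U \<inter> space mu \<inter> V)) \<longlonglongrightarrow> measure mu U * measure mu V"
proof -
  obtain n1 n2 where d1: "dep (- int n1) (2*n1+1) U" and d2: "dep (- int n2) (2*n2+1) V"
    using U V unfolding wset_def by blast
  define n where "n = max n1 n2"
  define a where "a = - int n"
  define k where "k = 2*n+1"
  have dU: "dep a k U" unfolding a_def k_def by (rule dep_mono[OF d1]) (simp add: n_def)
  have dV: "dep a k V" unfolding a_def k_def by (rule dep_mono[OF d2]) (simp add: n_def)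
  have Us: "U \<subseteq> space mu" and Vs: "V \<subseteq> space mu"
    using U V sets.sets_into_space unfolding wset_def by auto
  define S where "S = num (p*q) a k ` U \<inter> {..<(p*q)^k}"
  define T where "T = num (p*q) a k ` V \<inter> {..<(p*q)^k}"
  have Ue: "U = {c \<in> space mu. num (p*q) a k c \<in> S}"
    using win_rep[OF Us dU] num_lt[of _ "p*q" a k] Us unfolding S_def by (auto simp: space_mu subset_iff)
  have Ve: "V = {c \<in> space mu. num (p*q) a k c \<in> T}"
    using win_rep[OF Vs dV] num_lt[of _ "p*q" a k] Vs unfolding T_def by (auto simp: space_mu subset_iff)
  have Ssub: "S \<subseteq> {..<(p*q)^k}" and Tsub: "T \<subseteq> {..<(p*q)^k}" by (auto simp: S_def T_def)
  have mU: "measure mu U = card S / (p*q)^k"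
    using win_measure[of a k S] Ssub unfolding Ue by (simp add: Int_absorb2)
  have mV: "measure mu V = card T / (p*q)^k"
    using win_measure[of a k T] Tsub unfolding Ve by (simp add: Int_absorb2)
  have eq: "measure mu ((Fp ^^ t) -` U \<inter> space mu \<inter> V)
     = real (card {N. N < (p*q)^(k+2*t) \<and> (N div q^(2*t)) mod (p*q)^k \<in> S \<and> (N div (p*q)^t) mod (p*q)^k \<in> T}) / (p*q)^(k+2*t)" for t
  proof -
    have setEq: "(Fp ^^ t) -` U \<inter> space mu \<inter> V = {c \<in> space mu. num (p*q) (a - int t) (k+2*t) c \<in>
        {N. (N div q^(2*t)) mod (p*q)^k \<in> S \<and> (N div (p*q)^t) mod (p*q)^k \<in> T}}"
    proof -
      have w: "num (p*q) a k c = (num (p*q) (a - int t) (k+2*t) c div (p*q)^t) mod (p*q)^k" if "c \<in> space mu" for c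
      proof -
        have e0: "t + k + t = k + 2*t" by simp
        show ?thesis using num_window[of c "p*q" a k t t, unfolded e0] that by (simp add: space_mu)
      qed
      have f: "num (p*q) a k ((Fp ^^ t) c) = (num (p*q) (a - int t) (k + 2*t) c div q^(2*t)) mod (p*q)^k" if "c \<in> space mu" for c
        by (rule num_Fpow) (use that p0 q0 in \<open>auto simp: space_mu\<close>)
      show ?thesis
      proof (rule set_eqI)
        fix c
        show "c \<in> (Fp ^^ t) -` U \<inter> space mu \<inter> V \<longleftrightarrow> c \<in> {c \<in> space mu. num (p*q) (a - int t) (k+2*t) c \<in>
          {N. (N div q^(2*t)) mod (p*q)^k \<in> S \<and> (N div (p*q)^t) mod (p*q)^k \<in> T}}"
        proof (cases "c \<in> space mu")
          case True
          have "(Fp ^^ t) c \<in> U \<longleftrightarrow> num (p*q) a k ((Fp ^^ t) c) \<in> S"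
            using Fpow_space[OF True, of t] by (subst Ue) simp
          moreover have "c \<in> V \<longleftrightarrow> num (p*q) a k c \<in> S'" if "S' = T" for S'
            using True that by (subst Ve) simp
          ultimately show ?thesis using True w[OF True] f[OF True] by simp
        next
          case False thus ?thesis by simp
        qed
      qed
    qed
    have "measure mu ((Fp ^^ t) -` U \<inter> space mu \<inter> V) = real (card ({N. (N div q^(2*t)) mod (p*q)^k \<in> S \<and> (N div (p*q)^t) mod (p*q)^k \<in> T} \<inter> {..<(p*q)^(k+2*t)})) / (p*q)^(k+2*t)"
      unfolding setEq by (rule win_measure)
    also have "{N. (N div q^(2*t)) mod (p*q)^k \<in> S \<and> (N div (p*q)^t) mod (p*q)^k \<in> T} \<inter> {..<(p*q)^(k+2*t)}
        = {N. N < (p*q)^(k+2*t) \<and> (N div q^(2*t)) mod (p*q)^k \<in> S \<and> (N div (p*q)^t) mod (p*q)^k \<in> T}" by auto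
    finally show ?thesis .
  qed
  have "measure mu U * measure mu V = real (card S) * card T / ((p*q)^k)^2"
    unfolding mU mV by (simp add: power2_eq_square)
  thus ?thesis unfolding eq using mix_limit[OF q0 qp Ssub Tsub] by simp
qed

end


definition sdiff :: "'a set \<Rightarrow> 'a set \<Rightarrow> 'a set" where "sdiff A B = (A - B) \<union> (B - A)"

context CAq begin

lemma wset_compl: "wset C \<Longrightarrow> wset (space mu - C)"
  unfolding wset_def dep_def by auto

lemma wset_Un: assumes "wset A" "wset B" shows "wset (A \<union> B)"
proof -
  obtain n1 n2 where d1: "dep (- int n1) (2*n1+1) A" and d2: "dep (- int n2) (2*n2+1) B"
    using assms unfolding wset_def by blast
  have "dep (- int (max n1 n2)) (2*max n1 n2+1) A" "dep (- int (max n1 n2)) (2*max n1 n2+1) B"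
    by (rule dep_mono[OF d1], simp) (rule dep_mono[OF d2], simp)
  hence "dep (- int (max n1 n2)) (2*max n1 n2+1) (A \<union> B)" unfolding dep_def by blast
  thus ?thesis using assms unfolding wset_def by blast
qed

lemma wset_empty: "wset {}"
  unfolding wset_def dep_def by auto

lemma wset_UN: "finite I \<Longrightarrow> (\<forall>i\<in>I. wset (C i)) \<Longrightarrow> wset (\<Union>i\<in>I. C i)"
  by (induction I rule: finite_induct) (auto intro: wset_Un wset_empty)

lemma wset_prod_algebra:
  assumes "X \<in> prod_algebra UNIV (\<lambda>_::int. uniform_count_measure (alphabet (p*q)))"
  shows "wset X"
  using assms
proof (rule prod_algebraE)
  fix J E assume X: "X = prod_emb UNIV (\<lambda>_. uniform_count_measure (alphabet (p*q))) J (Pi\<^sub>E J E)"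
    and J: "finite J" and E: "\<And>i. i \<in> J \<Longrightarrow> E i \<in> sets (uniform_count_measure (alphabet (p*q)))"
  show "wset X" unfolding wset_def X using emb_rep[of J E, OF J E] by blast
qed

lemma prob: "prob_space mu" by (rule prob_mu)

lemma meas_sdiff:
  assumes "A \<in> sets mu" "B \<in> sets mu"
  shows "\<bar>measure mu A - measure mu B\<bar> \<le> measure mu (sdiff A B)"
proof -
  interpret prob_space mu by (rule prob_mu)
  have s: "sdiff A B \<in> sets mu" using assms unfolding sdiff_def by auto
  have "measure mu A \<le> measure mu (B \<union> sdiff A B)"
    using assms s by (intro finite_measure_mono) (auto simp: sdiff_def)
  also have "\<dots> \<le> measure mu B + measure mu (sdiff A B)" using assms s by (intro measure_subadditive) (auto intro: emeasure_finite)
  finally have 1: "measure mu A \<le> measure mu B + measure mu (sdiff A B)" .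
  have "measure mu B \<le> measure mu (A \<union> sdiff A B)"
    using assms s by (intro finite_measure_mono) (auto simp: sdiff_def)
  also have "\<dots> \<le> measure mu A + measure mu (sdiff A B)" using assms s by (intro measure_subadditive) (auto intro: emeasure_finite)
  finally have 2: "measure mu B \<le> measure mu A + measure mu (sdiff A B)" .
  show ?thesis using 1 2 by linarith
qed

lemma approx:
  assumes X: "X \<in> sets mu"
  shows "\<forall>e>0. \<exists>C. wset C \<and> measure mu (sdiff X C) < e"
proof -
  interpret prob_space mu by (rule prob_mu)
  have sm: "sets mu = sigma_sets (space mu) (prod_algebra UNIV (\<lambda>_::int. uniform_count_measure (alphabet (p*q))))"
    unfolding bernoulli_mu_def by (simp add: sets_PiM space_PiM)
  have "X \<in> sigma_sets (space mu) (prod_algebra UNIV (\<lambda>_::int. uniform_count_measure (alphabet (p*q))))"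
    using X sm by simp
  thus ?thesis
  proof (induction rule: sigma_sets.induct)
    case (Basic a)
    hence "wset a" by (rule wset_prod_algebra)
    moreover have "sdiff a a = {}" by (simp add: sdiff_def)
    ultimately show ?case by force
  next
    case Empty
    show ?case using wset_empty by (force simp: sdiff_def)
  next
    case (Compl a)
    have as: "a \<in> sets mu" using Compl(1) sm by simp
    show ?case
    proof (intro allI impI)
      fix e :: real assume "0 < e"
      then obtain C where C: "wset C" "measure mu (sdiff a C) < e" using Compl(2) by blast
      have "C \<subseteq> space mu" using C(1) sets.sets_into_space unfolding wset_def by auto
      moreover have "a \<subseteq> space mu" using as sets.sets_into_space by auto
      ultimately have "sdiff (space mu - a) (space mu - C) = sdiff a C" unfolding sdiff_def by auto
      thus "\<exists>C'. wset C' \<and> measure mu (sdiff (space mu - a) C') < e"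
        using C wset_compl by metis
    qed
  next
    case (Union A)
    have As: "A i \<in> sets mu" for i using Union(1) sm by simp
    show ?case
    proof (intro allI impI)
      fix e :: real assume e: "0 < e"
      define B where "B n = (\<Union>i<n. A i)" for n
      have Bs: "B n \<in> sets mu" for n unfolding B_def using As by auto
      have "incseq B" unfolding B_def incseq_def by (intro allI impI UN_mono) auto
      moreover have "range B \<subseteq> sets mu" using Bs by auto
      ultimately have lim: "(\<lambda>n. measure mu (B n)) \<longlonglongrightarrow> measure mu (\<Union>n. B n)"
        by (intro finite_Lim_measure_incseq)
      have UB: "(\<Union>n. B n) = (\<Union>i. A i)" unfolding B_def by auto
      obtain N where N: "\<bar>measure mu (B N) - measure mu (\<Union>i. A i)\<bar> < e/2"
        using LIMSEQ_D[OF lim, of "e/2"] e unfolding UB by auto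
      have "\<forall>i. \<exists>C. wset C \<and> measure mu (sdiff (A i) C) < e / (2 * (N+1))"
        using Union(2) e by simp
      then obtain C where C: "\<And>i. wset (C i)" "\<And>i. measure mu (sdiff (A i) (C i)) < e / (2 * (N+1))"
        by metis
      define C' where "C' = (\<Union>i<N. C i)"
      have wC': "wset C'" unfolding C'_def using C(1) by (intro wset_UN) auto
      have Cs: "C i \<in> sets mu" for i using C(1) unfolding wset_def by auto
      have Us: "(\<Union>i. A i) \<in> sets mu" using As by auto
      have sub: "sdiff (\<Union>i. A i) C' \<subseteq> ((\<Union>i. A i) - B N) \<union> (\<Union>i<N. sdiff (A i) (C i))"
        unfolding sdiff_def C'_def B_def by auto
      have sds: "sdiff (A i) (C i) \<in> sets mu" for i using As Cs unfolding sdiff_def by auto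
      have "measure mu (sdiff (\<Union>i. A i) C') \<le> measure mu (((\<Union>i. A i) - B N) \<union> (\<Union>i<N. sdiff (A i) (C i)))"
        using sub Us Bs sds by (intro finite_measure_mono) auto
      also have "\<dots> \<le> measure mu ((\<Union>i. A i) - B N) + measure mu (\<Union>i<N. sdiff (A i) (C i))"
        using Us Bs sds by (intro measure_subadditive) (auto intro: emeasure_finite)
      also have "measure mu (\<Union>i<N. sdiff (A i) (C i)) \<le> (\<Sum>i<N. measure mu (sdiff (A i) (C i)))"
        using sds by (intro finite_measure_subadditive_finite) auto
      also have "\<dots> \<le> (\<Sum>i<N. e / (2 * (N+1)))" using C(2) by (intro sum_mono) (simp add: less_imp_le)
      also have "measure mu ((\<Union>i. A i) - B N) = measure mu (\<Union>i. A i) - measure mu (B N)"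
        using Us Bs by (intro finite_measure_Diff) (auto simp: B_def)
      finally have "measure mu (sdiff (\<Union>i. A i) C') \<le> measure mu (\<Union>i. A i) - measure mu (B N) + N * (e / (2 * (N+1)))"
        by simp
      also have "\<dots> < e/2 + e/2"
      proof -
        have "N * (e / (2 * (N+1))) \<le> e/2" using e by (simp add: field_simps)
        thus ?thesis using N by linarith
      qed
      finally show "\<exists>C. wset C \<and> measure mu (sdiff (\<Union>i. A i) C) < e" using wC' by auto
    qed
  qed
qed

end


context CAq begin

lemma Fpow_pres: "S \<in> sets mu \<Longrightarrow> measure mu ((Fp ^^ t) -` S \<inter> space mu) = measure mu S"
  using measure_distr[OF Fpow_measurable[of t], of S] distr_Fpow[of t] by simp

lemma mix_all:
  assumes U: "U \<in> sets mu" and V: "V \<in> sets mu"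
  shows "(\<lambda>t. measure mu ((Fp ^^ t) -` U \<inter> space mu \<inter> V)) \<longlonglongrightarrow> measure mu U * measure mu V"
proof (rule LIMSEQ_I)
  interpret prob_space mu by (rule prob_mu)
  fix r :: real assume r: "0 < r"
  obtain U' where U': "wset U'" "measure mu (sdiff U U') < r/8" using approx[OF U] r by (meson divide_pos_pos zero_less_numeral)
  obtain V' where V': "wset V'" "measure mu (sdiff V V') < r/8" using approx[OF V] r by (meson divide_pos_pos zero_less_numeral)
  have U's: "U' \<in> sets mu" and V's: "V' \<in> sets mu" using U'(1) V'(1) unfolding wset_def by auto
  obtain N where N: "\<forall>t\<ge>N. norm (measure mu ((Fp ^^ t) -` U' \<inter> space mu \<inter> V') - measure mu U' * measure mu V') < r/4"
    using LIMSEQ_D[OF wset_mix[OF U'(1) V'(1)], of "r/4"] r by auto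
  have L: "\<bar>measure mu U * measure mu V - measure mu U' * measure mu V'\<bar> < r/4"
  proof -
    have d1: "\<bar>measure mu U - measure mu U'\<bar> < r/8" using meas_sdiff[OF U U's] U'(2) by linarith
    have d2: "\<bar>measure mu V - measure mu V'\<bar> < r/8" using meas_sdiff[OF V V's] V'(2) by linarith
    have e: "measure mu U * measure mu V - measure mu U' * measure mu V'
        = (measure mu U - measure mu U') * measure mu V + measure mu U' * (measure mu V - measure mu V')"
      by (simp add: algebra_simps)
    have b1: "\<bar>(measure mu U - measure mu U') * measure mu V\<bar> \<le> \<bar>measure mu U - measure mu U'\<bar>"
      unfolding abs_mult by (rule mult_left_le) (auto simp: prob_le_1)
    have b2: "\<bar>measure mu U' * (measure mu V - measure mu V')\<bar> \<le> \<bar>measure mu V - measure mu V'\<bar>"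
      unfolding abs_mult by (rule mult_left_le_one_le) (auto simp: prob_le_1)
    show ?thesis unfolding e using b1 b2 d1 d2 abs_triangle_ineq[of "(measure mu U - measure mu U') * measure mu V" "measure mu U' * (measure mu V - measure mu V')"]
      by linarith
  qed
  show "\<exists>no. \<forall>t\<ge>no. norm (measure mu ((Fp ^^ t) -` U \<inter> space mu \<inter> V) - measure mu U * measure mu V) < r"
  proof (intro exI allI impI)
    fix t assume t: "N \<le> t"
    let ?A = "(Fp ^^ t) -` U \<inter> space mu" and ?A' = "(Fp ^^ t) -` U' \<inter> space mu"
    have As: "?A \<in> sets mu" "?A' \<in> sets mu" using U U's Fpow_measurable[of t] by (auto intro: measurable_sets)
    have sdU: "sdiff U U' \<in> sets mu" using U U's unfolding sdiff_def by auto
    have sdV: "sdiff V V' \<in> sets mu" using V V's unfolding sdiff_def by auto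
    have pre: "(Fp ^^ t) -` sdiff U U' \<inter> space mu \<in> sets mu" using sdU Fpow_measurable[of t] by (auto intro: measurable_sets)
    have "\<bar>measure mu (?A \<inter> V) - measure mu (?A' \<inter> V')\<bar> \<le> measure mu (sdiff (?A \<inter> V) (?A' \<inter> V'))"
      using As U V V's by (intro meas_sdiff) auto
    also have "\<dots> \<le> measure mu (((Fp ^^ t) -` sdiff U U' \<inter> space mu) \<union> sdiff V V')"
      using pre sdV by (intro finite_measure_mono) (auto simp: sdiff_def)
    also have "\<dots> \<le> measure mu ((Fp ^^ t) -` sdiff U U' \<inter> space mu) + measure mu (sdiff V V')"
      using pre sdV by (intro measure_subadditive) (auto intro: emeasure_finite)
    also have "measure mu ((Fp ^^ t) -` sdiff U U' \<inter> space mu) = measure mu (sdiff U U')"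
      by (rule Fpow_pres[OF sdU])
    finally have a: "\<bar>measure mu (?A \<inter> V) - measure mu (?A' \<inter> V')\<bar> < r/4" using U'(2) V'(2) by linarith
    have b: "\<bar>measure mu (?A' \<inter> V') - measure mu U' * measure mu V'\<bar> < r/4" using N t by auto
    show "norm (measure mu ((Fp ^^ t) -` U \<inter> space mu \<inter> V) - measure mu U * measure mu V) < r"
      using a b L unfolding real_norm_def by (simp only: Int_assoc)
  qed
qed

end

theorem theorem3:
  fixes p q :: nat
  assumes "q > 1" and "p > q" and "coprime p q"
  shows "F_pq p q \<in> measurable (bernoulli_mu p q) (bernoulli_mu p q)
    \<and> (\<forall>S \<in> sets (bernoulli_mu p q).
         emeasure (bernoulli_mu p q) (F_pq p q -` S \<inter> space (bernoulli_mu p q))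
           = emeasure (bernoulli_mu p q) S)
    \<and> (\<forall>U \<in> sets (bernoulli_mu p q). \<forall>V \<in> sets (bernoulli_mu p q).
         (\<lambda>t::nat. measure (bernoulli_mu p q)
             (((F_pq p q) ^^ t) -` U \<inter> space (bernoulli_mu p q) \<inter> V))
         \<longlonglongrightarrow> measure (bernoulli_mu p q) U * measure (bernoulli_mu p q) V)"
proof -
  interpret CAq p q using assms by unfold_locales
  have m: "F_pq p q \<in> measurable mu mu" using Fpow_measurable[of 1] by simp
  have pres: "\<forall>S \<in> sets mu. emeasure mu (F_pq p q -` S \<inter> space mu) = emeasure mu S"
  proof
    fix S assume "S \<in> sets mu"
    thus "emeasure mu (F_pq p q -` S \<inter> space mu) = emeasure mu S"
      using emeasure_distr[OF Fpow_measurable[of 1], of S] distr_Fpow[of 1] by simp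
  qed
  show ?thesis using m pres mix_all by blast
qed



end
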